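(* Let $n\geq 2$ be an integer and let $L_n$ be the $n$-element MV-chain. Then the number of $(\odot,\vee)$-derivations on $L_n$ is exactly $$|\operatorname{Der}(L_n)|=\frac{(n-1)(n+2)}{2}.$$
   Context: An MV-algebra is an algebra $(A,\oplus,{}^*,0)$ of type $(2,1,0)$ satisfying: $x\oplus(y\oplus z)=(x\oplus y)\oplus z$, $x\oplus y=y\oplus x$, $x\oplus 0=x$, $x^{**}=x$, $x\oplus 0^*=0^*$, $(x^*\oplus y)^*\oplus y=(y^*\oplus x)^*\oplus x$. Put $1=0^*$ and $x\odot y=(x^*\oplus y^* )^*$. The natural order is $x\le y$ iff $x^*\oplus y=1$; it makes $A$ a bounded distributive lattice with $x\vee y=(x\odot y^* )\oplus y$ and $x\wedge y=x\odot(x^*\oplus y)$. A $(\odot,\vee)$-derivation on an MV-algebra $A$ is a map $d:A\to A$ with $d(x\odot y)=(d(x)\odot y)\vee(x\odot d(y))$ for all $x,y\in A$; $\operatorname{Der}(A)$ denotes the set of all of them. $L_n=\{0,\frac1{n-1},\dots,\frac{n-2}{n-1},1\}\subseteq[0,1]$ with $x\oplus y=\min\{1,x+y\}$ and $x^*=1-x$ (so $x\odot y=\max\{0,x+y-1\}$). *)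

theory Defs
  imports Complex_Main "HOL-Library.FuncSet"
begin

definition Ln :: "nat \<Rightarrow> real set" where
  "Ln n = {real k / real (n - 1) | k. k \<le> n - 1}"

definition mv_oplus :: "real \<Rightarrow> real \<Rightarrow> real" where
  "mv_oplus x y = min 1 (x + y)"

definition mv_neg :: "real \<Rightarrow> real" where
  "mv_neg x = 1 - x"

definition mv_odot :: "real \<Rightarrow> real \<Rightarrow> real" where
  "mv_odot x y = mv_neg (mv_oplus (mv_neg x) (mv_neg y))"

definition mv_join :: "real \<Rightarrow> real \<Rightarrow> real" where
  "mv_join x y = mv_oplus (mv_odot x (mv_neg y)) y"

text \<open>(\<odot>,\<or>)-derivations on L_n: maps L_n \<rightarrow> L_n (extensional, i.e. undefined
  outside L_n, so that they correspond bijectively to maps on the carrier).\<close>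
definition Der_Ln :: "nat \<Rightarrow> (real \<Rightarrow> real) set" where
  "Der_Ln n = {d \<in> Ln n \<rightarrow>\<^sub>E Ln n.
     \<forall>x \<in> Ln n. \<forall>y \<in> Ln n.
       d (mv_odot x y) = mv_join (mv_odot (d x) y) (mv_odot x (d y))}"

end

theory Submission imports Defs begin

definition phi :: "nat \<Rightarrow> nat \<Rightarrow> real" where "phi M i = real i / real M"

lemma Ln_phi: "Ln n = phi (n-1) ` {..n-1}"
  unfolding Ln_def phi_def by auto

lemma phi_inj: "M > 0 \<Longrightarrow> phi M a = phi M b \<longleftrightarrow> a = b"
  unfolding phi_def by (simp add: divide_cancel_right)

lemma phi_M: "M > 0 \<Longrightarrow> phi M M = 1" unfolding phi_def by simp

lemma odot_eq: "mv_odot x y = max 0 (x + y - 1)"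
  unfolding mv_odot_def mv_oplus_def mv_neg_def by (simp add: min_def max_def)

lemma odot_phi: "M > 0 \<Longrightarrow> mv_odot (phi M a) (phi M b) = phi M (a + b - M)"
proof -
  assume M: "M > 0"
  have e: "phi M a + phi M b - 1 = (real a + real b - real M) / real M"
    unfolding phi_def using M by (simp add: field_simps)
  show ?thesis
  proof (cases "a + b \<ge> M")
    case True
    then have "real (a + b - M) = real a + real b - real M" by (simp add: of_nat_diff)
    moreover have "(real a + real b - real M) / real M \<ge> 0" using True M by simp
    ultimately show ?thesis unfolding odot_eq e by (simp add: phi_def)
  next
    case False
    then have "(real a + real b - real M) / real M \<le> 0" using M
      by (simp add: divide_nonpos_pos)
    then show ?thesis unfolding odot_eq e using False by (simp add: phi_def)
  qed
qed

lemma phi_mono: "M > 0 \<Longrightarrow> phi M a \<le> phi M b \<longleftrightarrow> a \<le> b"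
  unfolding phi_def by (simp add: divide_le_cancel)

lemma join_phi: "M > 0 \<Longrightarrow> a \<le> M \<Longrightarrow> b \<le> M \<Longrightarrow> mv_join (phi M a) (phi M b) = phi M (max a b)"
proof -
  assume M: "M > 0" and ab: "a \<le> M" "b \<le> M"
  have le: "phi M a \<le> 1" "phi M b \<le> 1" "phi M a \<ge> 0" "phi M b \<ge> 0" unfolding phi_def using M ab by auto
  have "mv_join (phi M a) (phi M b) = max (phi M a) (phi M b)"
    unfolding mv_join_def mv_odot_def mv_oplus_def mv_neg_def using le by (simp add: min_def max_def)
  also have "\<dots> = phi M (max a b)" using phi_mono[OF M, of a b] phi_mono[OF M, of b a]
    by (auto simp: max_def)
  finally show ?thesis .
qed

lemma core:
  fixes g :: "nat \<Rightarrow> nat"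
  assumes M: "M \<ge> 1" and rng: "\<forall>i\<le>M. g i \<le> M"
    and eq: "\<forall>i\<le>M. \<forall>k\<le>M. g (i + k - M) = max (g i + k - M) (i + g k - M)"
  shows "g (M-1) < M" "g M \<le> g (M-1) + 1" "\<forall>i<M. g i = i + (g (M-1) + 1) - M"
proof -
  define s where "s = g (M-1)"
  have main: "g (M - 1 - r) = (M - 1 - r) + (s + 1) - M" if "r \<le> M - 1" for r
    using that
  proof (induction r)
    case 0 then show ?case unfolding s_def using M by simp
  next
    case (Suc r)
    let ?i = "M - 1 - r"
    have i1: "?i \<ge> 1" "?i \<le> M" using Suc.prems by auto
    have "g (?i + (M-1) - M) = max (g ?i + (M-1) - M) (?i + g (M-1) - M)"
      by (rule eq[rule_format]) (use i1 in auto)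
    moreover have "?i + (M-1) - M = ?i - 1" using i1 by simp
    moreover have "g ?i = ?i + (s+1) - M" using Suc by simp
    ultimately have "g (?i - 1) = ?i + s - M" unfolding s_def[symmetric] using i1 by (simp add: max_def)
    moreover have "M - 1 - Suc r = ?i - 1" by simp
    ultimately show ?case using i1 by simp
  qed
  have g0: "g 0 = 0" using eq[rule_format, of 0 0] rng M by simp
  have "g 0 = 0 + (s+1) - M" using main[of "M-1"] by simp
  then show "g (M-1) < M" using g0 s_def by simp
  show "\<forall>i<M. g i = i + (g (M-1) + 1) - M"
  proof (intro allI impI)
    fix i assume "i < M"
    then show "g i = i + (g (M-1) + 1) - M" using main[of "M-1-i"] s_def by simp
  qed
  have "g (M + (M-1) - M) = max (g M + (M-1) - M) (M + g (M-1) - M)"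
    by (rule eq[rule_format]) (use M in auto)
  then show "g M \<le> g (M-1) + 1" using M by (simp add: max_def split: if_splits)
qed

lemma suff:
  fixes j t M :: nat
  assumes "1 \<le> j" "j \<le> M" "t \<le> j" "i \<le> M" "k \<le> M"
  defines "G \<equiv> \<lambda>i. if i = M then t else i + j - M"
  shows "G (i + k - M) = max (G i + k - M) (i + G k - M)"
  using assms unfolding G_def by (auto simp: max_def)

definition Dfun :: "nat \<Rightarrow> nat \<Rightarrow> nat \<Rightarrow> real \<Rightarrow> real" where
  "Dfun M j t = restrict (\<lambda>x. if x = 1 then phi M t else mv_odot x (phi M j)) (phi M ` {..M})"

lemma Dfun_phi: "M > 0 \<Longrightarrow> a \<le> M \<Longrightarrow> Dfun M j t (phi M a) = phi M (if a = M then t else a + j - M)"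
  unfolding Dfun_def using phi_inj[of M a M] phi_M[of M] by (auto simp: odot_phi)

lemma sum_count: "2 * (\<Sum>j\<in>{1..M}. Suc j) = M * (M + 3)"
  by (induction M) (auto simp: algebra_simps)

theorem theorem3p11:
  fixes n :: nat
  assumes "n \<ge> 2"
  shows "card (Der_Ln n) = (n - 1) * (n + 2) div 2"
proof -
  define M where "M = n - 1"
  have M1: "M \<ge> 1" and M0: "M > 0" using assms unfolding M_def by auto
  have LnM: "Ln n = phi M ` {..M}" unfolding M_def by (rule Ln_phi)
  define P where "P = Sigma {1..M} (\<lambda>j. {..j})"
  define F where "F = (\<lambda>(j,t). Dfun M j t)"
  have sub1: "F ` P \<subseteq> Der_Ln n"
  proof
    fix d assume "d \<in> F ` P"
    then obtain j t where jt: "1 \<le> j" "j \<le> M" "t \<le> j" and d: "d = Dfun M j t"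
      unfolding P_def F_def by auto
    define G where "G = (\<lambda>i. if i = M then t else i + j - M)"
    have dphi: "d (phi M a) = phi M (G a)" if "a \<le> M" for a
      unfolding d G_def using Dfun_phi[OF M0 that] .
    have Grng: "G a \<le> M" if "a \<le> M" for a using that unfolding G_def using jt by auto
    have "d \<in> Ln n \<rightarrow>\<^sub>E Ln n"
    proof
      fix x assume "x \<in> Ln n"
      then obtain a where "a \<le> M" "x = phi M a" unfolding LnM by auto
      then show "d x \<in> Ln n" unfolding LnM using dphi Grng by auto
    next
      fix x assume "x \<notin> Ln n"
      then show "d x = undefined" unfolding d Dfun_def LnM by auto
    qed
    moreover have "\<forall>x \<in> Ln n. \<forall>y \<in> Ln n.
       d (mv_odot x y) = mv_join (mv_odot (d x) y) (mv_odot x (d y))"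
    proof (intro ballI)
      fix x y assume "x \<in> Ln n" "y \<in> Ln n"
      then obtain a b where ab: "a \<le> M" "b \<le> M" "x = phi M a" "y = phi M b" unfolding LnM by auto
      have "G (a + b - M) = max (G a + b - M) (a + G b - M)"
        unfolding G_def by (rule suff) (use jt ab in auto)
      have r1: "G a + b - M \<le> M" "a + G b - M \<le> M" using Grng[of a] Grng[of b] ab by auto
      have r2: "a + b - M \<le> M" using ab by simp
      have l: "d (mv_odot x y) = phi M (G (a + b - M))"
        unfolding ab(3,4) odot_phi[OF M0] by (rule dphi[OF r2])
      have rr: "mv_join (mv_odot (d x) y) (mv_odot x (d y)) = phi M (max (G a + b - M) (a + G b - M))"
        unfolding ab(3,4) dphi[OF ab(1)] dphi[OF ab(2)] odot_phi[OF M0] by (rule join_phi[OF M0 r1])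
      show "d (mv_odot x y) = mv_join (mv_odot (d x) y) (mv_odot x (d y))"
        unfolding l rr using \<open>G (a + b - M) = _\<close> by simp
    qed
    ultimately show "d \<in> Der_Ln n" unfolding Der_Ln_def by blast
  qed
  have sub2: "Der_Ln n \<subseteq> F ` P"
  proof
    fix d assume dD: "d \<in> Der_Ln n"
    then have dfun: "d \<in> Ln n \<rightarrow>\<^sub>E Ln n" and dder: "\<forall>x \<in> Ln n. \<forall>y \<in> Ln n.
       d (mv_odot x y) = mv_join (mv_odot (d x) y) (mv_odot x (d y))" unfolding Der_Ln_def by auto
    define g where "g = (\<lambda>i. SOME k. k \<le> M \<and> d (phi M i) = phi M k)"
    have gspec: "g i \<le> M \<and> d (phi M i) = phi M (g i)" if "i \<le> M" for i
    proof -
      have "d (phi M i) \<in> Ln n" using dfun that unfolding LnM by auto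
      then have "\<exists>k. k \<le> M \<and> d (phi M i) = phi M k" unfolding LnM by auto
      then show ?thesis unfolding g_def by (rule someI_ex)
    qed
    have rng: "\<forall>i\<le>M. g i \<le> M"
    proof (intro allI impI)
      fix i :: nat assume "i \<le> M" then show "g i \<le> M" using gspec by blast
    qed
    have eq: "\<forall>i\<le>M. \<forall>k\<le>M. g (i + k - M) = max (g i + k - M) (i + g k - M)"
    proof (intro allI impI)
      fix i k assume ik: "i \<le> M" "k \<le> M"
      have mem: "phi M i \<in> Ln n" "phi M k \<in> Ln n" using ik unfolding LnM by auto
      have r1: "g i + k - M \<le> M" "i + g k - M \<le> M"
        using rng[rule_format, OF ik(1)] rng[rule_format, OF ik(2)] ik by linarith+
      have r2: "i + k - M \<le> M" using ik by simp
      have "phi M (g (i + k - M)) = d (mv_odot (phi M i) (phi M k))"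
        unfolding odot_phi[OF M0] using gspec[OF r2] by simp
      also have "\<dots> = mv_join (mv_odot (d (phi M i)) (phi M k)) (mv_odot (phi M i) (d (phi M k)))"
        using dder[rule_format, OF mem(1) mem(2)] .
      also have "\<dots> = phi M (max (g i + k - M) (i + g k - M))"
        unfolding gspec[OF ik(1), THEN conjunct2] gspec[OF ik(2), THEN conjunct2] odot_phi[OF M0]
        by (rule join_phi[OF M0 r1])
      finally have "phi M (g (i + k - M)) = phi M (max (g i + k - M) (i + g k - M))" .
      then show "g (i + k - M) = max (g i + k - M) (i + g k - M)" using phi_inj[OF M0] by blast
    qed
    note c = core[OF M1 rng eq]
    define j where "j = g (M-1) + 1"
    define t where "t = g M"
    have jtP: "(j, t) \<in> P" unfolding P_def j_def t_def using c(1) c(2) by simp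
    have "d = Dfun M j t"
    proof
      fix x show "d x = Dfun M j t x"
      proof (cases "x \<in> Ln n")
        case True
        then obtain a where a: "a \<le> M" "x = phi M a" unfolding LnM by auto
        show ?thesis
        proof (cases "a = M")
          case True
          have "d x = phi M (g a)" using a gspec[OF a(1)] by simp
          moreover have "Dfun M j t x = phi M t" using Dfun_phi[OF M0 a(1), of j t] a(2) True by simp
          ultimately show ?thesis using True t_def by simp
        next
          case False
          then have "a < M" using a by simp
          then have "g a = a + j - M" using c(3) unfolding j_def by blast
          moreover have "d x = phi M (g a)" using a gspec[OF a(1)] by simp
          moreover have "Dfun M j t x = phi M (a + j - M)" using Dfun_phi[OF M0 a(1), of j t] a(2) False by simp
          ultimately show ?thesis by simp
        qed
      next
        case False
        have "d x = undefined" using PiE_arb[OF dfun False] .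
        moreover have "Dfun M j t x = undefined" using False unfolding Dfun_def LnM by simp
        ultimately show ?thesis by simp
      qed
    qed
    then have "d = F (j, t)" unfolding F_def by simp
    then show "d \<in> F ` P" using jtP by blast
  qed
  have inj: "inj_on F P"
  proof (rule inj_onI)
    fix p q assume p: "p \<in> P" and q: "q \<in> P" and e: "F p = F q"
    obtain j t where pj: "p = (j,t)" "1 \<le> j" "j \<le> M" using p unfolding P_def by auto
    obtain j' t' where qj: "q = (j',t')" "1 \<le> j'" "j' \<le> M" using q unfolding P_def by auto
    have e': "Dfun M j t = Dfun M j' t'" using e pj qj unfolding F_def by simp
    have "phi M t = phi M t'" using fun_cong[OF e', of "phi M M"] Dfun_phi[OF M0, of M] by simp
    then have "t = t'" using phi_inj[OF M0] by blast
    have "phi M (M - 1 + j - M) = phi M (M - 1 + j' - M)"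
    proof -
      have neq: "(M - 1 = M) = False" using M1 by simp
      have h: "Dfun M jj tt (phi M (M-1)) = phi M (M - 1 + jj - M)" for jj tt
        using Dfun_phi[OF M0, of "M-1" jj tt] unfolding neq by simp
      show ?thesis using fun_cong[OF e', of "phi M (M-1)"] unfolding h .
    qed
    then have "M - 1 + j - M = M - 1 + j' - M" using phi_inj[OF M0] by blast
    then have "j = j'" using pj qj by simp
    then show "p = q" using pj qj \<open>t = t'\<close> by simp
  qed
  have "Der_Ln n = F ` P" using sub1 sub2 by blast
  then have "card (Der_Ln n) = card P" using card_image[OF inj] by simp
  also have "card P = (\<Sum>j\<in>{1..M}. Suc j)" unfolding P_def by (simp add: card_SigmaI)
  also have "\<dots> = M * (M + 3) div 2" using sum_count[of M] by simp
  also have "M * (M + 3) = (n - 1) * (n + 2)" unfolding M_def using assms by simp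
  finally show ?thesis .
qed

end
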